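(* Let $M$ be a modular lattice of finite length and $x,y\in S(M)$. If $y$ covers $x$ in the partially ordered set $S(M)$ (ordered as in $M$), then $x<y\le x^*$ in $M$.
   Context: $M$ is a modular lattice of finite length (every chain finite) with least element $0$ and greatest element $1$. For $a\in M$: $a^*$ is the join of all elements covering $a$ if $a<1$, and $1^*=1$. An interval $[a,b]$ is \emph{atomistic} if every element of it is a join of atoms of $[a,b]$ (elements covering $a$). The \emph{skeleton} $S(M)$ is the set of least elements of the maximal (under inclusion) atomistic intervals of $M$. *)

theory Defs
  imports Main
begin

definition modular_lattice :: "'a::lattice itself \<Rightarrow> bool" where
  "modular_lattice _ \<longleftrightarrow>
     (\<forall>a b c :: 'a. a \<le> c \<longrightarrow> sup a (inf b c) = inf (sup a b) c)"

definition finite_length :: "'a::order itself \<Rightarrow> bool" where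
  "finite_length _ \<longleftrightarrow>
     (\<forall>C :: 'a set. Complete_Partial_Order.chain (\<le>) C \<longrightarrow> finite C)"

definition covers :: "'a::order \<Rightarrow> 'a \<Rightarrow> bool" where
  "covers a b \<longleftrightarrow> a < b \<and> \<not> (\<exists>c. a < c \<and> c < b)"

definition is_lub_in :: "'a::order set \<Rightarrow> 'a set \<Rightarrow> 'a \<Rightarrow> bool" where
  "is_lub_in X S j \<longleftrightarrow> j \<in> X \<and> (\<forall>s\<in>S. s \<le> j) \<and>
     (\<forall>u\<in>X. (\<forall>s\<in>S. s \<le> u) \<longrightarrow> j \<le> u)"

text \<open>Join of an arbitrary subset of the lattice (exists under finite length).\<close>
definition Join :: "'a::order set \<Rightarrow> 'a" where
  "Join S = (THE j. is_lub_in UNIV S j)"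

definition star :: "'a::bounded_lattice \<Rightarrow> 'a" where
  "star a = (if a < top then Join {b. covers a b} else top)"

definition atomistic_interval :: "'a::order \<Rightarrow> 'a \<Rightarrow> bool" where
  "atomistic_interval a b \<longleftrightarrow> a \<le> b \<and>
     (\<forall>c\<in>{a..b}. \<exists>A \<subseteq> {t\<in>{a..b}. covers a t}. is_lub_in {a..b} A c)"

definition maximal_atomistic_interval :: "'a::order \<Rightarrow> 'a \<Rightarrow> bool" where
  "maximal_atomistic_interval a b \<longleftrightarrow> atomistic_interval a b \<and>
     (\<forall>c d. atomistic_interval c d \<and> {a..b} \<subseteq> {c..d} \<longrightarrow> {c..d} = {a..b})"

definition skeleton :: "'a::order itself \<Rightarrow> 'a set" where
  "skeleton _ = {a. \<exists>b. maximal_atomistic_interval a b}"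

definition covers_in :: "'a::order set \<Rightarrow> 'a \<Rightarrow> 'a \<Rightarrow> bool" where
  "covers_in P x y \<longleftrightarrow> x \<in> P \<and> y \<in> P \<and> x < y \<and> \<not> (\<exists>z\<in>P. x < z \<and> z < y)"

end

theory Submission
  imports Defs
begin

lemma modD:
  assumes "modular_lattice TYPE('a::lattice)" "a \<le> c"
  shows "sup a (inf b c) = inf (sup a b) (c::'a)"
  using assms unfolding modular_lattice_def by blast

lemma wf_less:
  assumes "finite_length TYPE('a::order)"
  shows "wf {(x,y::'a). x < y}"
proof -
  { fix f :: "nat \<Rightarrow> 'a" assume f: "\<forall>i. f (Suc i) < f i"
    have dec: "i < j \<Longrightarrow> f j < f i" for i j
    proof (induction j)
      case 0 thus ?case by simp
    next
      case (Suc j)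
      have st: "f (Suc j) < f j" using f by blast
      show ?case
      proof (cases "i = j")
        case True thus ?thesis using st by simp
      next
        case False
        hence "i < j" using Suc.prems by simp
        hence "f j < f i" by (rule Suc.IH)
        thus ?thesis using st by (rule order.strict_trans[rotated])
      qed
    qed
    have cmp: "f i \<le> f j \<or> f j \<le> f i" for i j
    proof (cases i j rule: linorder_cases)
      case less thus ?thesis using dec[of i j] by (simp add: less_imp_le)
    next
      case equal thus ?thesis by simp
    next
      case greater thus ?thesis using dec[of j i] by (simp add: less_imp_le)
    qed
    have "Complete_Partial_Order.chain (\<le>) (range f)"
      unfolding chain_def using cmp by auto
    hence fin: "finite (range f)" using assms unfolding finite_length_def by blast
    have "inj f"
    proof (rule injI)
      fix i j assume e: "f i = f j"
      show "i = j"
      proof (cases i j rule: linorder_cases)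
        case less thus ?thesis using dec[of i j] e by simp
      next
        case equal thus ?thesis .
      next
        case greater thus ?thesis using dec[of j i] e by simp
      qed
    qed
    hence "finite (UNIV :: nat set)" using finite_imageD[OF fin] by blast
    hence False by simp }
  thus ?thesis unfolding wf_iff_no_infinite_down_chain by auto
qed

lemma wf_greater:
  assumes "finite_length TYPE('a::order)"
  shows "wf {(x,y::'a). y < x}"
proof -
  { fix f :: "nat \<Rightarrow> 'a" assume f: "\<forall>i. f i < f (Suc i)"
    have dec: "i < j \<Longrightarrow> f i < f j" for i j
    proof (induction j)
      case 0 thus ?case by simp
    next
      case (Suc j)
      have st: "f j < f (Suc j)" using f by blast
      show ?case
      proof (cases "i = j")
        case True thus ?thesis using st by simp
      next
        case False
        hence "i < j" using Suc.prems by simp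
        hence "f i < f j" by (rule Suc.IH)
        thus ?thesis using st by (rule order.strict_trans)
      qed
    qed
    have cmp: "f i \<le> f j \<or> f j \<le> f i" for i j
    proof (cases i j rule: linorder_cases)
      case less thus ?thesis using dec[of i j] by (simp add: less_imp_le)
    next
      case equal thus ?thesis by simp
    next
      case greater thus ?thesis using dec[of j i] by (simp add: less_imp_le)
    qed
    have "Complete_Partial_Order.chain (\<le>) (range f)"
      unfolding chain_def using cmp by auto
    hence fin: "finite (range f)" using assms unfolding finite_length_def by blast
    have "inj f"
    proof (rule injI)
      fix i j assume e: "f i = f j"
      show "i = j"
      proof (cases i j rule: linorder_cases)
        case less thus ?thesis using dec[of i j] e by simp
      next
        case equal thus ?thesis .
      next
        case greater thus ?thesis using dec[of j i] e by simp
      qed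
    qed
    hence "finite (UNIV :: nat set)" using finite_imageD[OF fin] by blast
    hence False by simp }
  thus ?thesis unfolding wf_iff_no_infinite_down_chain by auto
qed

lemma ex_min:
  assumes "finite_length TYPE('a::order)" "x \<in> Q"
  shows "\<exists>z\<in>Q. \<forall>y\<in>Q. \<not> y < (z::'a)"
proof -
  obtain z where z: "z \<in> Q" and m: "\<And>y. (y, z) \<in> {(x,y::'a). x < y} \<Longrightarrow> y \<notin> Q"
    by (rule wfE_min[OF wf_less[OF assms(1)] assms(2)]) blast
  have "\<forall>y\<in>Q. \<not> y < z" using m by blast
  thus ?thesis using z by blast
qed

lemma ex_max:
  assumes "finite_length TYPE('a::order)" "x \<in> Q"
  shows "\<exists>z\<in>Q. \<forall>y\<in>Q. \<not> (z::'a) < y"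
proof -
  obtain z where z: "z \<in> Q" and m: "\<And>y. (y, z) \<in> {(x,y::'a). y < x} \<Longrightarrow> y \<notin> Q"
    by (rule wfE_min[OF wf_greater[OF assms(1)] assms(2)]) blast
  have "\<forall>y\<in>Q. \<not> z < y" using m by blast
  thus ?thesis using z by blast
qed

lemma Join_lub:
  assumes fl: "finite_length TYPE('a::bounded_lattice)"
  shows "is_lub_in UNIV S (Join (S::'a set))"
proof -
  define U where "U = {u::'a. \<forall>s\<in>S. s \<le> u}"
  have "top \<in> U" unfolding U_def by simp
  from ex_min[OF fl this] obtain u where u: "u \<in> U" and um: "\<forall>v\<in>U. \<not> v < u" by blast
  have ub: "\<forall>s\<in>S. s \<le> u" using u unfolding U_def by simp
  have least: "u \<le> v" if v: "\<forall>s\<in>S. s \<le> v" for v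
  proof -
    have "inf u v \<in> U" using ub v unfolding U_def by simp
    hence "\<not> inf u v < u" using um by blast
    moreover have "inf u v \<le> u" by (rule inf.cobounded1)
    ultimately have "inf u v = u" using order_le_neq_trans[of "inf u v" u] by auto
    thus "u \<le> v" by (simp add: inf.absorb_iff1)
  qed
  have lub: "is_lub_in UNIV S u"
    unfolding is_lub_in_def using ub least by blast
  have uniq: "j = u" if h: "is_lub_in UNIV S j" for j
  proof -
    have "j \<le> u" using h ub unfolding is_lub_in_def by blast
    moreover have "u \<le> j" using h least unfolding is_lub_in_def by blast
    ultimately show ?thesis by (rule order_antisym)
  qed
  show ?thesis unfolding Join_def by (rule theI[of "is_lub_in UNIV S", OF lub uniq])
qed

lemma star_ge_cover:
  assumes fl: "finite_length TYPE('a::bounded_lattice)" and "covers a p"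
  shows "p \<le> star (a::'a)"
proof -
  have ap: "a < p" using assms(2) unfolding covers_def by blast
  have "a < top" by (rule order.strict_trans2[OF ap top_greatest])
  hence "star a = Join {b. covers a b}" unfolding star_def by simp
  moreover have "\<forall>s\<in>{b. covers a b}. s \<le> Join {b. covers a b}"
    using Join_lub[OF fl, of "{b. covers a b}"] unfolding is_lub_in_def by blast
  ultimately show ?thesis using assms(2) by simp
qed

lemma star_least:
  assumes fl: "finite_length TYPE('a::bounded_lattice)" and "a < top"
    and "\<And>p. covers a p \<Longrightarrow> p \<le> u"
  shows "star (a::'a) \<le> u"
proof -
  have "star a = Join {b. covers a b}" using assms(2) unfolding star_def by simp
  moreover have "\<forall>v. (\<forall>s\<in>{b. covers a b}. s \<le> v) \<longrightarrow> Join {b. covers a b} \<le> v"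
    using Join_lub[OF fl, of "{b. covers a b}"] unfolding is_lub_in_def by blast
  moreover have "\<forall>s\<in>{b. covers a b}. s \<le> u" using assms(3) by simp
  ultimately show ?thesis by simp
qed

lemma exists_cover:
  assumes fl: "finite_length TYPE('a::order)" and "a < b"
  shows "\<exists>t. covers a t \<and> t \<le> (b::'a)"
proof -
  define Q where "Q = {t. a < t \<and> t \<le> b}"
  have "b \<in> Q" using assms unfolding Q_def by simp
  from ex_min[OF fl this] obtain t where t: "t \<in> Q" and tm: "\<forall>y\<in>Q. \<not> y < t" by blast
  have at: "a < t" and tb: "t \<le> b" using t unfolding Q_def by auto
  have "\<not> (a < z \<and> z < t)" for z
  proof
    assume z: "a < z \<and> z < t"
    hence "z \<le> b" using order_trans[OF less_imp_le tb] by blast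
    hence "z \<in> Q" using z unfolding Q_def by simp
    thus False using tm z by blast
  qed
  hence "covers a t" unfolding covers_def using at by blast
  thus ?thesis using tb by blast
qed

lemma exists_lcover:
  assumes fl: "finite_length TYPE('a::order)" and "a \<le> c" "c < b"
  shows "\<exists>e. a \<le> e \<and> c \<le> e \<and> covers e (b::'a)"
proof -
  define Q where "Q = {e. c \<le> e \<and> e < b}"
  have "c \<in> Q" using assms unfolding Q_def by simp
  from ex_max[OF fl this] obtain e where t: "e \<in> Q" and tm: "\<forall>y\<in>Q. \<not> e < y" by blast
  have ce: "c \<le> e" and eb: "e < b" using t unfolding Q_def by auto
  have "\<not> (e < z \<and> z < b)" for z
  proof
    assume z: "e < z \<and> z < b"
    hence "c \<le> z" using order_trans[OF ce less_imp_le] by blast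
    hence "z \<in> Q" using z unfolding Q_def by simp
    thus False using tm z by blast
  qed
  hence "covers e b" unfolding covers_def using eb by blast
  moreover have "a \<le> e" using assms(2) ce by (rule order_trans)
  ultimately show ?thesis using ce by blast
qed

lemma star_ge:
  assumes fl: "finite_length TYPE('a::bounded_lattice)"
  shows "a \<le> star (a::'a)"
proof (cases "a < top")
  case True
  then obtain t where at: "covers a t" using exists_cover[OF fl] by blast
  have "a < t" using at unfolding covers_def by blast
  moreover have "t \<le> star a" by (rule star_ge_cover[OF fl at])
  ultimately show ?thesis using order_trans[OF less_imp_le] by blast
next
  case False thus ?thesis unfolding star_def by simp
qed

lemma T1:
  assumes md: "modular_lattice TYPE('a::lattice)" and c: "covers (inf a b) b"
  shows "covers a (sup a (b::'a))"
proof -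
  have ab: "inf a b < b" using c unfolding covers_def by auto
  have "sup a b \<noteq> a"
  proof
    assume "sup a b = a"
    hence "b \<le> a" using sup.cobounded2[of b a] by simp
    hence "inf a b = b" by (rule inf.absorb2)
    thus False using ab by simp
  qed
  hence lt: "a < sup a b" by (simp add: order_less_le)
  have nb: "\<not> (a < z \<and> z < sup a b)" for z
  proof
    assume z: "a < z \<and> z < sup a b"
    have az: "a \<le> z" by (rule less_imp_le, rule conjunct1[OF z])
    have zl: "z \<le> sup a b" by (rule less_imp_le, rule conjunct2[OF z])
    have "sup a (inf b z) = inf (sup a b) z" using modD[OF md az] .
    also have "\<dots> = z" using zl by (rule inf.absorb2)
    finally have zz: "sup a (inf b z) = z" .
    have i1: "inf a b \<le> inf b z" using az by (simp add: le_infI1)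
    have i2: "inf b z \<le> b" by simp
    have "inf b z = inf a b \<or> inf b z = b"
    proof (rule ccontr)
      assume "\<not> (inf b z = inf a b \<or> inf b z = b)"
      hence "inf a b < inf b z" "inf b z < b" using i1 i2 by (auto simp: order_less_le)
      thus False using c unfolding covers_def by blast
    qed
    thus False
    proof
      assume "inf b z = inf a b"
      hence "z = sup a (inf a b)" using zz by simp
      hence "z = a" by simp
      thus False using z by simp
    next
      assume "inf b z = b" hence "b \<le> z" using inf.cobounded2[of b z] by simp
      hence "sup a b \<le> z" using az by simp
      thus False using leD[of "sup a b" z] z by blast
    qed
  qed
  show ?thesis unfolding covers_def using lt nb by blast
qed

lemma T2:
  assumes md: "modular_lattice TYPE('a::lattice)" and c: "covers a (sup a b)"
  shows "covers (inf a b) (b::'a)"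
proof -
  have ab: "a < sup a b" using c unfolding covers_def by auto
  have "inf a b \<noteq> b"
  proof
    assume "inf a b = b"
    hence "b \<le> a" using inf.cobounded1[of a b] by simp
    hence "sup a b = a" by (rule sup.absorb1)
    thus False using ab by simp
  qed
  hence lt: "inf a b < b" by (simp add: order_less_le)
  have nb: "\<not> (inf a b < z \<and> z < b)" for z
  proof
    assume z: "inf a b < z \<and> z < b"
    have zb: "z \<le> b" by (rule less_imp_le, rule conjunct2[OF z])
    have e1: "sup z (inf a b) = inf (sup z a) b" using modD[OF md zb] .
    have e2: "sup z (inf a b) = z" by (rule sup.absorb1, rule less_imp_le, rule conjunct1[OF z])
    have zz: "inf (sup a z) b = z" using e1 e2 sup.commute[of z a] by simp
    have i1: "a \<le> sup a z" by (rule sup.cobounded1)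
    have i2: "sup a z \<le> sup a b" using zb sup.mono[OF order_refl] by blast
    have "sup a z = a \<or> sup a z = sup a b"
    proof (rule ccontr)
      assume "\<not> (sup a z = a \<or> sup a z = sup a b)"
      hence "a < sup a z" "sup a z < sup a b" using i1 i2 by (auto simp: order_less_le)
      thus False using c unfolding covers_def by blast
    qed
    thus False
    proof
      assume "sup a z = a"
      hence "inf a b = z" using zz by simp
      thus False using z by simp
    next
      assume "sup a z = sup a b"
      hence "inf (sup a b) b = z" using zz by simp
      moreover have "inf (sup a b) b = b" by (rule inf.absorb2) simp
      ultimately have "z = b" by simp
      thus False using z by simp
    qed
  qed
  show ?thesis unfolding covers_def using lt nb by blast
qed

lemma cover_between:
  assumes "covers c p" "c \<le> z" "z \<le> p"
  shows "z = c \<or> z = (p::'a::order)"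
proof (rule ccontr)
  assume "\<not> (z = c \<or> z = p)"
  hence "c < z" "z < p" using assms(2,3) order_le_neq_trans[of c z] order_le_neq_trans[of z p] by auto
  thus False using assms(1) unfolding covers_def by blast
qed

lemma cover_meet:
  assumes "covers c p" "c \<le> v" "\<not> p \<le> v"
  shows "inf v p = (c::'a::lattice)"
proof -
  have cp: "c < p" using assms(1) unfolding covers_def by auto
  have "c \<le> inf v p" using assms(2) cp by (simp add: less_imp_le)
  moreover have "inf v p \<noteq> p"
  proof
    assume "inf v p = p"
    hence "p \<le> v" using inf.cobounded1[of v p] by simp
    thus False using assms(3) by simp
  qed
  ultimately have "inf v p = c \<or> inf v p = p" using cover_between[OF assms(1), of "inf v p"] by simp
  thus ?thesis using \<open>inf v p \<noteq> p\<close> by blast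
qed

lemma F2:
  assumes md: "modular_lattice TYPE('a::lattice)" and "c \<le> e" "covers c p"
  shows "sup e p = e \<or> covers e (sup e (p::'a))"
proof (cases "p \<le> e")
  case True thus ?thesis by (simp add: sup.absorb1)
next
  case False
  have "inf e p = c" by (rule cover_meet[OF assms(3,2) False])
  hence "covers (inf e p) p" using assms(3) by simp
  thus ?thesis using T1[OF md] by blast
qed

lemma star_mono:
  assumes fl: "finite_length TYPE('a::bounded_lattice)" and md: "modular_lattice TYPE('a)"
    and ce: "c \<le> e"
  shows "star c \<le> star (e::'a)"
proof (cases "e = top")
  case True thus ?thesis unfolding star_def by simp
next
  case False
  have "c \<noteq> top" using ce False top.extremum_unique by auto
  hence "c < top" by (simp add: top.not_eq_extremum)
  thus ?thesis
  proof (rule star_least[OF fl])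
    fix p assume p: "covers c p"
    have "p \<le> sup e p" by simp
    moreover have "sup e p \<le> star e"
    proof (cases "sup e p = e")
      case True thus ?thesis using star_ge[OF fl, of e] by simp
    next
      case False
      hence "covers e (sup e p)" using F2[OF md ce p] by blast
      thus ?thesis by (rule star_ge_cover[OF fl])
    qed
    ultimately show "p \<le> star e" by (rule order_trans)
  qed
qed

lemma a_le_foldr: "(a::'a::lattice) \<le> foldr sup rs a"
  by (induction rs) (auto intro: le_supI2)

lemma claim_list:
  assumes md: "modular_lattice TYPE('a::lattice)"
  shows "set rs \<subseteq> {r. covers a r} \<Longrightarrow> a \<le> w \<Longrightarrow> w < c \<Longrightarrow> c \<le> foldr sup rs a
     \<Longrightarrow> \<exists>t. covers a t \<and> t \<le> c \<and> \<not> t \<le> (w::'a)"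
proof (induction rs arbitrary: w c)
  case Nil
  hence "c \<le> w" using order_trans[of c a w] by simp
  thus ?case using leD[of c w] Nil.prems(3) by blast
next
  case (Cons r rs)
  define W where "W = foldr sup rs a"
  have rc: "covers a r" using Cons.prems(1) by simp
  have aw: "a \<le> w" and wc: "w < c" using Cons.prems(2,3) .
  have wcl: "w \<le> c" using wc by (rule less_imp_le)
  have ac: "a \<le> c" using aw wcl by (rule order_trans)
  have aW: "a \<le> W" unfolding W_def by (rule a_le_foldr)
  have crW: "c \<le> sup r W" using Cons.prems(4) unfolding W_def by simp
  have IH: "\<And>w c. a \<le> w \<Longrightarrow> w < c \<Longrightarrow> c \<le> W \<Longrightarrow> \<exists>t. covers a t \<and> t \<le> c \<and> \<not> t \<le> w"
    using Cons.IH Cons.prems(1) unfolding W_def by simp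
  show ?case
  proof (cases "inf c W \<le> w")
    case False
    have "a \<le> inf w W" using aw aW by simp
    moreover have "inf w W < inf c W"
    proof (rule order_le_neq_trans)
      show "inf w W \<le> inf c W" by (rule inf_mono[OF wcl order_refl])
      show "inf w W \<noteq> inf c W"
      proof
        assume "inf w W = inf c W"
        hence "inf c W \<le> w" using inf.cobounded1[of w W] by simp
        thus False using False by simp
      qed
    qed
    moreover have "inf c W \<le> W" by simp
    ultimately obtain t where t: "covers a t" "t \<le> inf c W" "\<not> t \<le> inf w W" using IH by blast
    have "t \<le> c" using t(2) by simp
    moreover have "\<not> t \<le> w" using t(2,3) by simp
    ultimately show ?thesis using t(1) by blast
  next
    case B: True
    show ?thesis
    proof (cases "r \<le> c")
      case True
      show ?thesis
      proof (cases "r \<le> w")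
        case False thus ?thesis using rc True by blast
      next
        case rw: True
        have "sup r (inf W c) = inf (sup r W) c" using modD[OF md True] .
        also have "\<dots> = c" using crW by (simp add: inf.absorb2)
        finally have eq: "sup r (inf W c) = c" .
        have "inf W c \<le> w" using B by (simp add: inf_commute)
        hence "sup r (inf W c) \<le> w" using rw by simp
        hence "c \<le> w" using eq by simp
        thus ?thesis using leD[of c w] wc by blast
      qed
    next
      case rnc: False
      have cra: "inf c r = a" by (rule cover_meet[OF rc ac rnc])
      define u where "u = inf (sup c r) W"
      define w0 where "w0 = inf (sup w r) W"
      have ur: "sup r u = sup c r"
      proof -
        have "sup r (inf W (sup c r)) = inf (sup r W) (sup c r)" using modD[OF md, of r "sup c r" W] by simp
        also have "\<dots> = sup c r" using crW by (simp add: inf.absorb2)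
        finally show ?thesis unfolding u_def by (simp add: inf_commute)
      qed
      have nuw: "\<not> u \<le> w0"
      proof
        assume "u \<le> w0"
        hence "u \<le> sup w r" unfolding w0_def by simp
        hence "sup r u \<le> sup w r" by simp
        hence "sup c r \<le> sup w r" using ur by simp
        hence cwr: "c \<le> sup w r" by simp
        have "sup w (inf r c) = inf (sup w r) c" by (rule modD[OF md wcl])
        also have "\<dots> = c" using cwr by (simp add: inf.absorb2)
        finally have "sup w (inf r c) = c" .
        moreover have "inf r c = a" using cra by (simp add: inf_commute)
        ultimately have "sup w a = c" by simp
        moreover have "sup w a = w" using aw by (rule sup.absorb1)
        ultimately have "w = c" by simp
        thus False using wc by simp
      qed
      have w0u: "w0 \<le> u" unfolding w0_def u_def
        by (rule inf_mono[OF sup_mono[OF wcl order_refl] order_refl])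
      have "w0 \<noteq> u" using nuw by auto
      hence "w0 < u" using w0u by (simp add: order_le_neq_trans)
      moreover have "a \<le> w0" unfolding w0_def by (rule le_infI[OF le_supI1[OF aw] aW])
      moreover have uW: "u \<le> W" unfolding u_def by simp
      ultimately obtain s where s: "covers a s" "s \<le> u" "\<not> s \<le> w0" using IH by blast
      have swr: "\<not> s \<le> sup w r"
      proof
        assume h: "s \<le> sup w r"
        have "s \<le> W" using s(2) uW by (rule order_trans)
        hence "s \<le> w0" unfolding w0_def using h by simp
        thus False using s(3) by simp
      qed
      define t where "t = inf c (sup s r)"
      have ucr: "u \<le> sup c r" unfolding u_def by simp
      have sup_u: "sup s r \<le> sup c r" by (rule le_supI[OF order_trans[OF s(2) ucr] sup.cobounded2])
      have tr: "sup r t = sup s r"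
      proof -
        have "sup r (inf c (sup s r)) = inf (sup r c) (sup s r)" using modD[OF md, of r "sup s r" c] by simp
        also have "sup r c = sup c r" by (rule sup.commute)
        also have "inf (sup c r) (sup s r) = sup s r" by (rule inf.absorb2[OF sup_u])
        finally show ?thesis unfolding t_def .
      qed
      have tc: "t \<le> c" unfolding t_def by simp
      have tw: "\<not> t \<le> w"
      proof
        assume "t \<le> w"
        hence "sup r t \<le> sup w r" by (simp add: le_supI1)
        hence "sup s r \<le> sup w r" using tr by simp
        hence "s \<le> sup w r" by simp
        thus False using swr by simp
      qed
      have rs_ne: "\<not> s \<le> r"
      proof
        assume "s \<le> r" hence "s \<le> sup w r" by (rule le_supI2)
        thus False using swr by simp
      qed
      have ar: "a \<le> r" using rc unfolding covers_def by (simp add: less_imp_le)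
      have as: "a \<le> s" using s(1) unfolding covers_def by (simp add: less_imp_le)
      have irs: "inf r s = a" by (rule cover_meet[OF s(1) ar rs_ne])
      have "covers (inf r s) s" using irs s(1) by simp
      hence "covers r (sup r s)" by (rule T1[OF md])
      hence "covers r (sup r t)" using tr by (simp add: sup_commute)
      hence ct: "covers (inf r t) t" by (rule T2[OF md])
      have at: "a \<le> t" unfolding t_def by (rule le_infI[OF ac le_supI1[OF as]])
      have "\<not> r \<le> t"
      proof
        assume "r \<le> t" hence "r \<le> c" using tc by (rule order_trans)
        thus False using rnc by simp
      qed
      hence "inf t r = a" by (rule cover_meet[OF rc at])
      hence "inf r t = a" by (simp add: inf_commute)
      hence "covers a t" using ct by simp
      thus ?thesis using tc tw by blast
    qed
  qed
qed

lemma star_foldr: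
  assumes fl: "finite_length TYPE('a::bounded_lattice)"
  shows "\<exists>rs. set rs \<subseteq> {r. covers a r} \<and> star (a::'a) \<le> foldr sup rs a"
proof -
  define F where "F = {foldr sup rs a | rs. set rs \<subseteq> {r. covers a r}}"
  have "a \<in> F" unfolding F_def by (rule CollectI, rule exI[of _ "[]"]) simp
  from ex_max[OF fl this] obtain f where f: "f \<in> F" and fm: "\<forall>y\<in>F. \<not> f < y" by blast
  obtain rs where rs: "f = foldr sup rs a" "set rs \<subseteq> {r. covers a r}" using f unfolding F_def by blast
  have up: "r \<le> f" if r: "covers a r" for r
  proof -
    have "sup r f \<in> F" unfolding F_def rs(1)
      by (rule CollectI, rule exI[of _ "r # rs"]) (simp add: r rs(2)[simplified])
    hence n: "\<not> f < sup r f" using fm by blast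
    have "f \<le> sup r f" by (rule sup.cobounded2)
    hence "f = sup r f" using n order_le_neq_trans[of f "sup r f"] by blast
    thus ?thesis using sup.cobounded1[of r f] by simp
  qed
  have "star a \<le> f"
  proof (cases "a < top")
    case True show ?thesis by (rule star_least[OF fl True up])
  next
    case False
    hence at: "a = top" by (metis top.not_eq_extremum)
    have "a \<le> f" unfolding rs(1) by (rule a_le_foldr)
    hence "top \<le> f" using at by simp
    hence "f = top" by (rule top.extremum_uniqueI)
    thus ?thesis by simp
  qed
  thus ?thesis using rs(2) unfolding rs(1) by blast
qed

lemma claim:
  assumes fl: "finite_length TYPE('a::bounded_lattice)" and md: "modular_lattice TYPE('a)"
    and "a \<le> w" "w < c" "c \<le> star (a::'a)"
  shows "\<exists>t. covers a t \<and> t \<le> c \<and> \<not> t \<le> w"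
proof -
  obtain rs where rs: "set rs \<subseteq> {r. covers a r}" "star a \<le> foldr sup rs a" using star_foldr[OF fl] by blast
  have "c \<le> foldr sup rs a" using assms(5) rs(2) by (rule order_trans)
  thus ?thesis by (rule claim_list[OF md rs(1) assms(3) assms(4)])
qed

lemma atomistic_star:
  assumes fl: "finite_length TYPE('a::bounded_lattice)" and md: "modular_lattice TYPE('a)"
  shows "atomistic_interval a (star (a::'a))"
  unfolding atomistic_interval_def
proof (intro conjI ballI)
  show "a \<le> star a" by (rule star_ge[OF fl])
  fix c assume c: "c \<in> {a..star a}"
  have ac: "a \<le> c" and cs: "c \<le> star a" using c by auto
  let ?A = "{t. covers a t \<and> t \<le> c}"
  have "?A \<subseteq> {t \<in> {a..star a}. covers a t}"
  proof
    fix t assume t: "t \<in> ?A"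
    hence ct: "covers a t" and tc: "t \<le> c" by auto
    have "a \<le> t" using ct unfolding covers_def by (simp add: less_imp_le)
    moreover have "t \<le> star a" using tc cs by (rule order_trans)
    ultimately show "t \<in> {t \<in> {a..star a}. covers a t}" using ct by simp
  qed
  moreover have "is_lub_in {a..star a} ?A c"
    unfolding is_lub_in_def
  proof (intro conjI ballI impI)
    show "c \<in> {a..star a}" by fact
    fix u assume u: "u \<in> {a..star a}" and ub: "\<forall>s\<in>?A. s \<le> u"
    show "c \<le> u"
    proof (rule ccontr)
      assume ncu: "\<not> c \<le> u"
      have "a \<le> inf c u" using ac u by simp
      moreover have "inf c u < c"
      proof (rule order_le_neq_trans)
        show "inf c u \<le> c" by simp
        show "inf c u \<noteq> c"
        proof
          assume "inf c u = c" hence "c \<le> u" by (simp add: inf.absorb_iff1)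
          thus False using ncu by simp
        qed
      qed
      ultimately obtain t where t: "covers a t" "t \<le> c" "\<not> t \<le> inf c u"
        using claim[OF fl md _ _ cs] by blast
      have "t \<le> u" using ub t(1,2) by blast
      hence "t \<le> inf c u" using t(2) by simp
      thus False using t(3) by simp
    qed
  qed simp_all
  ultimately show "\<exists>A\<subseteq>{t \<in> {a..star a}. covers a t}. is_lub_in {a..star a} A c" by blast
qed

lemma atom_le_star:
  assumes fl: "finite_length TYPE('a::bounded_lattice)" and "atomistic_interval a b"
  shows "b \<le> star (a::'a)"
proof (cases "a < top")
  case False thus ?thesis unfolding star_def by simp
next
  case True
  have ab: "a \<le> b" using assms(2) unfolding atomistic_interval_def by blast
  have "b \<in> {a..b}" using ab by simp
  then obtain A where A: "A \<subseteq> {t \<in> {a..b}. covers a t}" "is_lub_in {a..b} A b"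
    using assms(2) unfolding atomistic_interval_def by blast
  have "inf b (star a) \<in> {a..b}" using ab star_ge[OF fl, of a] by simp
  moreover have "\<forall>s\<in>A. s \<le> inf b (star a)"
  proof
    fix s assume "s \<in> A"
    hence "s \<in> {a..b}" "covers a s" using A(1) by auto
    thus "s \<le> inf b (star a)" using star_ge_cover[OF fl] by simp
  qed
  ultimately have "b \<le> inf b (star a)" using A(2) unfolding is_lub_in_def by blast
  thus ?thesis by simp
qed

lemma skel_NS:
  assumes fl: "finite_length TYPE('a::bounded_lattice)" and md: "modular_lattice TYPE('a)"
    and x: "x \<in> skeleton TYPE('a)" and m: "m < x"
  shows "\<not> star x \<le> star (m::'a)"
proof
  assume xm: "star x \<le> star m"
  obtain b where b: "maximal_atomistic_interval x b" using x unfolding skeleton_def by blast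
  have ai: "atomistic_interval x b" using b unfolding maximal_atomistic_interval_def by blast
  have bm: "b \<le> star m" using atom_le_star[OF fl ai] xm by (rule order_trans)
  have mx: "m \<le> x" using m by (rule less_imp_le)
  have "{x..b} \<subseteq> {m..star m}"
  proof
    fix v assume "v \<in> {x..b}"
    hence "x \<le> v" "v \<le> b" by auto
    thus "v \<in> {m..star m}" using order_trans[OF mx] order_trans[OF _ bm] by simp
  qed
  moreover have "\<forall>c d. atomistic_interval c d \<and> {x..b} \<subseteq> {c..d} \<longrightarrow> {c..d} = {x..b}"
    using b unfolding maximal_atomistic_interval_def by blast
  ultimately have "{m..star m} = {x..b}" using atomistic_star[OF fl md, of m] by blast
  moreover have "m \<in> {m..star m}" using star_ge[OF fl, of m] by simp
  ultimately have "x \<le> m" by auto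
  thus False using leD m by blast
qed

lemma key:
  assumes fl: "finite_length TYPE('a::bounded_lattice)" and md: "modular_lattice TYPE('a)"
    and x: "x \<in> skeleton TYPE('a)" and ez: "covers e z" and xz: "x \<le> z"
    and zs: "star z \<le> star (e::'a)"
  shows "x \<le> e"
proof (rule ccontr)
  assume nxe: "\<not> x \<le> e"
  define m where "m = inf e x"
  have ezl: "e \<le> z" using ez unfolding covers_def by (simp add: less_imp_le)
  have exz: "sup e x \<le> z" using ezl xz by simp
  have "sup e x = e \<or> sup e x = z" by (rule cover_between[OF ez sup.cobounded1 exz])
  moreover have "sup e x \<noteq> e"
  proof
    assume "sup e x = e" hence "x \<le> e" using sup.cobounded2[of x e] by simp
    thus False using nxe by simp
  qed
  ultimately have zex: "sup e x = z" by blast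
  have "covers e (sup e x)" using ez zex by simp
  hence mx: "covers m x" unfolding m_def by (rule T2[OF md])
  hence mlx: "m < x" unfolding covers_def by blast
  have "star x \<le> star m"
  proof (cases "x < top")
    case False
    hence xt: "x = top" by (metis top.not_eq_extremum)
    hence "top \<le> z" using xz by simp
    hence "z = top" by (rule top.extremum_uniqueI)
    moreover have "m = e" unfolding m_def using xt by simp
    moreover have st: "star (top::'a) = top" unfolding star_def by simp
    ultimately show ?thesis using zs xt by simp
  next
    case True
    show ?thesis
    proof (rule star_least[OF fl True])
      fix p assume xp: "covers x p"
      have xsm: "x \<le> star m" by (rule star_ge_cover[OF fl mx])
      have xlp: "x \<le> p" using xp unfolding covers_def by (simp add: less_imp_le)
      show "p \<le> star m"
      proof (cases "p \<le> z")
        case True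
        define q where "q = inf e p"
        have "sup x (inf e p) = inf (sup x e) p" by (rule modD[OF md xlp])
        also have "sup x e = z" using zex by (simp add: sup_commute)
        also have "inf z p = p" using True by (rule inf.absorb2)
        finally have sxq: "sup x q = p" unfolding q_def .
        have "inf x q = inf e (inf x p)" unfolding q_def by (simp add: inf_commute inf_left_commute)
        also have "inf x p = x" using xlp by (rule inf.absorb1)
        finally have ixq: "inf x q = m" unfolding m_def .
        have "covers x (sup x q)" using sxq xp by simp
        hence "covers (inf x q) q" by (rule T2[OF md])
        hence "covers m q" using ixq by simp
        hence "q \<le> star m" by (rule star_ge_cover[OF fl])
        thus ?thesis using sxq xsm by (metis le_sup_iff)
      next
        case False
        have "sup z p = z \<or> covers z (sup z p)" by (rule F2[OF md xz xp])
        moreover have "sup z p \<noteq> z"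
        proof
          assume "sup z p = z" hence "p \<le> z" using sup.cobounded2[of p z] by simp
          thus False using False by simp
        qed
        ultimately have czp: "covers z (sup z p)" by blast
        have "sup z p \<le> star z" by (rule star_ge_cover[OF fl czp])
        hence zpe: "sup z p \<le> star e" using zs by (rule order_trans)
        have "z < sup z p" using czp unfolding covers_def by blast
        then obtain r where r: "covers e r" "r \<le> sup z p" "\<not> r \<le> z"
          using claim[OF fl md ezl _ zpe] by blast
        have er: "e \<le> r" using r(1) unfolding covers_def by (simp add: less_imp_le)
        have sxr: "sup x r = sup z p"
        proof -
          have "z \<le> sup x r" unfolding zex[symmetric] using er by (simp add: le_supI2)
          moreover have "sup x r \<le> sup z p" using r(2) xz by (simp add: le_supI1)
          ultimately have "sup x r = z \<or> sup x r = sup z p" by (rule cover_between[OF czp])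
          moreover have "sup x r \<noteq> z"
          proof
            assume "sup x r = z" hence "r \<le> z" using sup.cobounded2[of r x] by simp
            thus False using r(3) by simp
          qed
          ultimately show ?thesis by blast
        qed
        define q where "q = inf r p"
        have "sup x (inf r p) = inf (sup x r) p" by (rule modD[OF md xlp])
        also have "\<dots> = p" using sxr by (simp add: inf.absorb2)
        finally have sxq: "sup x q = p" unfolding q_def .
        have izr: "inf z r = e" by (rule cover_meet[OF r(1) ezl r(3)])
        have ixr: "inf x r = m"
        proof -
          have "inf x r \<le> inf z r" using xz by (simp add: le_infI1)
          hence "inf x r \<le> inf x e" using izr by simp
          moreover have "inf x e \<le> inf x r" using er by (simp add: le_infI2)
          ultimately have "inf x r = inf x e" by (rule order_antisym)
          thus ?thesis unfolding m_def by (simp add: inf_commute)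
        qed
        have "inf x q = inf r (inf x p)" unfolding q_def by (simp add: inf_commute inf_left_commute)
        also have "inf x p = x" using xlp by (rule inf.absorb1)
        finally have ixq: "inf x q = m" using ixr by (simp add: inf_commute)
        have "covers x (sup x q)" using sxq xp by simp
        hence "covers (inf x q) q" by (rule T2[OF md])
        hence "covers m q" using ixq by simp
        hence "q \<le> star m" by (rule star_ge_cover[OF fl])
        thus ?thesis using sxq xsm by (metis le_sup_iff)
      qed
    qed
  qed
  thus False using skel_NS[OF fl md x mlx] by simp
qed

theorem lemma6p3:
  fixes x y :: "'a::bounded_lattice"
  assumes "modular_lattice TYPE('a)"
    and "finite_length TYPE('a)"
    and "x \<in> skeleton TYPE('a)" and "y \<in> skeleton TYPE('a)"
    and "covers_in (skeleton TYPE('a)) x y"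
  shows "x < y \<and> y \<le> star x"
proof -
  note md = assms(1) and fl = assms(2) and xS = assms(3)
  have xy: "x < y" and nb: "\<not> (\<exists>z\<in>skeleton TYPE('a). x < z \<and> z < y)"
    using assms(5) unfolding covers_in_def by auto
  obtain z where xz: "x \<le> z" and zy: "covers z y" using exists_lcover[OF fl order_refl xy] by blast
  have yz: "y \<le> star z" by (rule star_ge_cover[OF fl zy])
  define P where "P = {s. x \<le> s \<and> s \<le> z \<and> star z \<le> star s}"
  have "z \<in> P" using xz unfolding P_def by simp
  from ex_min[OF fl this] obtain s where sP: "s \<in> P" and sm: "\<forall>v\<in>P. \<not> v < s" by blast
  have xs0: "x \<le> s" and sz: "s \<le> z" and zss: "star z \<le> star s" using sP unfolding P_def by auto
  show ?thesis
  proof (cases "s = x")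
    case True
    have "y \<le> star s" using yz zss by (rule order_trans)
    thus ?thesis using xy True by simp
  next
    case False
    hence xs: "x < s" using xs0 by (simp add: order_le_neq_trans)
    have "z < y" using zy unfolding covers_def by blast
    hence sy: "s < y" using sz by (rule order.strict_trans1[rotated])
    have "maximal_atomistic_interval s (star s)"
      unfolding maximal_atomistic_interval_def
    proof (intro conjI allI impI)
      show "atomistic_interval s (star s)" by (rule atomistic_star[OF fl md])
      fix c d assume cd: "atomistic_interval c d \<and> {s..star s} \<subseteq> {c..d}"
      have ss: "s \<le> star s" by (rule star_ge[OF fl])
      have "s \<in> {c..d}" "star s \<in> {c..d}" using cd ss by auto
      hence cs: "c \<le> s" and sd: "star s \<le> d" by auto
      have dc: "d \<le> star c" using cd atom_le_star[OF fl] by blast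
      show "{c..d} = {s..star s}"
      proof (cases "c = s")
        case True
        hence "d = star s" using sd dc by (simp add: order_antisym)
        thus ?thesis using True by simp
      next
        case False
        hence "c < s" using cs by (simp add: order_le_neq_trans)
        then obtain e where ce: "c \<le> e" and es: "covers e s"
          using exists_lcover[OF fl order_refl] by blast
        have "star s \<le> star c" using sd dc by (rule order_trans)
        also have "star c \<le> star e" by (rule star_mono[OF fl md ce])
        finally have sse: "star s \<le> star e" .
        have xe: "x \<le> e" by (rule key[OF fl md xS es xs0 sse])
        have es0: "e < s" using es unfolding covers_def by blast
        have "e \<le> z" using less_imp_le[OF es0] sz by (rule order_trans)
        moreover have "star z \<le> star e" using zss sse by (rule order_trans)
        ultimately have "e \<in> P" using xe unfolding P_def by simp
        thus ?thesis using sm es0 by blast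
      qed
    qed
    hence "s \<in> skeleton TYPE('a)" unfolding skeleton_def by blast
    thus ?thesis using nb xs sy by blast
  qed
qed

end
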